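(* Let $(\xi_i,\mathcal{F}_i)_{i\ge 0}$ be a sequence of real-valued martingale differences on $(\Omega,\mathcal{F},\mathbf{P})$ with $\xi_0=0$, $\mathcal{F}_0=\{\emptyset,\Omega\}$, increasing $\sigma$-fields $\mathcal{F}_i\subseteq\mathcal{F}$ and $\mathbf{E}[\xi_i\mid\mathcal{F}_{i-1}]=0$ for $i\ge1$. Let $S_k=\sum_{i=1}^k\xi_i$. Let $\alpha\in(0,1)$ and assume $C_n:=\sum_{i=1}^n\mathbf{E}[\xi_i^2\exp\{(\xi_i^+)^\alpha\}]<\infty$ for every $n$. Define $\Upsilon(S)_n=\sum_{i=1}^n\mathbf{E}[\xi_i^2\exp\{(\xi_i^+)^\alpha\}\mid\mathcal{F}_{i-1}]$. If $\|\Upsilon(S)_n\|_\infty=o(n^{2-\alpha})$ as $n\to\infty$, then for any $x\ge0$, $$\limsup_{n\to\infty}\frac{1}{n^\alpha}\log\mathbf{P}\Big(\max_{1\le k\le n}\frac1n S_k\ge x\Big)\le -x^\alpha .$$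
   Context: $x^+=\max\{x,0\}$; $\|\cdot\|_\infty$ is the essential supremum norm. *)

theory Defs
  imports "HOL-Probability.Probability"
begin

definition ereal_ln :: "real \<Rightarrow> ereal" where
  "ereal_ln p = (if p \<le> 0 then -\<infinity> else ereal (ln p))"

end

theory Submission
  imports Defs "HOL-Real_Asymp.Real_Asymp" begin
lemma exp_taylor2: "exp (s::real) \<le> 1 + s + s^2/2 * exp (max s 0)"
proof (cases "s \<ge> 0")
  case True
  obtain t where t: "\<bar>t\<bar> \<le> \<bar>s\<bar>" "exp s = (\<Sum>m<2. (s ^ m) / fact m) + (exp t / fact 2) * s ^ 2"
    using Maclaurin_exp_le[of s 2] by blast
  have "exp t \<le> exp s" using t(1) True by simp
  hence "exp t * s^2 \<le> exp s * s^2" by (simp add: mult_right_mono)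
  hence "(exp t / fact 2) * s ^ 2 \<le> s^2/2 * exp s" by (simp add: algebra_simps)
  moreover have "(\<Sum>m<2. (s ^ m) / fact m) = 1 + s" by (simp add: numeral_2_eq_2)
  ultimately show ?thesis using t(2) True by (simp add: max_def)
next
  case False
  obtain t where t: "\<bar>t\<bar> \<le> \<bar>s\<bar>" "exp s = (\<Sum>m<3. (s ^ m) / fact m) + (exp t / fact 3) * s ^ 3"
    using Maclaurin_exp_le[of s 3] by blast
  have "s^3 = s * s^2" by (simp add: power3_eq_cube power2_eq_square)
  also have "\<dots> \<le> 0" using False by (simp add: mult_nonpos_nonneg)
  finally have "s^3 \<le> 0" .
  hence "(exp t / fact 3) * s ^ 3 \<le> 0" by (intro mult_nonneg_nonpos) auto
  moreover have "(\<Sum>m<3. (s ^ m) / fact m) = 1 + s + s^2/2" by (simp add: numeral_3_eq_3 numeral_2_eq_2 power2_eq_square)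
  ultimately show ?thesis using t(2) False by (simp add: max_def)
qed

lemma pt_bound:
  fixes b y \<alpha> :: real
  assumes b: "b > 0" and a: "0 < \<alpha>" "\<alpha> < 1"
  shows "exp (b powr (\<alpha>-1) * min y b) \<le> 1 + b powr (\<alpha>-1) * min y b
          + (b powr (\<alpha>-1))^2/2 * (y^2 * exp ((max y 0) powr \<alpha>))"
proof -
  define l where "l = b powr (\<alpha>-1)"
  define t where "t = min y b"
  have l0: "l > 0" using b by (simp add: l_def)
  have e: "exp (l*t) \<le> 1 + l*t + (l*t)^2/2 * exp (max (l*t) 0)" by (rule exp_taylor2)
  have m: "max (l*t) 0 \<le> (max y 0) powr \<alpha>"
  proof (cases "t > 0")
    case True
    have "l * t = t powr 1 * b powr (\<alpha>-1)" using True by (simp add: l_def)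
    also have "\<dots> \<le> t powr 1 * t powr (\<alpha>-1)"
      apply (rule mult_left_mono) apply (rule powr_mono2') using True a by (auto simp: t_def)
    also have "\<dots> = t powr \<alpha>" using True by (simp add: powr_mult_base)
    also have "\<dots> \<le> (max y 0) powr \<alpha>" apply (rule powr_mono2) using True a by (auto simp: t_def)
    finally show ?thesis by simp
  next
    case False
    then have "l*t \<le> 0" using l0 by (simp add: mult_nonneg_nonpos)
    then show ?thesis by simp
  qed
  have sq: "t^2 \<le> y^2" using b by (auto simp: t_def min_def)
  have "(l*t)^2/2 * exp (max (l*t) 0) = l^2/2 * (t^2 * exp (max (l*t) 0))"
    by (simp add: power_mult_distrib)
  also have "\<dots> \<le> l^2/2 * (y^2 * exp ((max y 0) powr \<alpha>))"
    by (intro mult_left_mono mult_mono) (use m sq in auto)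
  finally have "(l*t)^2/2 * exp (max (l*t) 0) \<le> l^2/2 * (y^2 * exp ((max y 0) powr \<alpha>))" .
  with e show ?thesis unfolding l_def t_def by linarith
qed

lemma integrable_bdd_mult:
  fixes f g :: "'a \<Rightarrow> real"
  assumes "integrable M f" "g \<in> borel_measurable M" "\<And>x. \<bar>g x\<bar> \<le> B"
  shows "integrable M (\<lambda>x. g x * f x)"
proof (rule Bochner_Integration.integrable_bound[where f="\<lambda>x. B * f x"])
  show "integrable M (\<lambda>x. B * f x)" using assms(1) by simp
  show "(\<lambda>x. g x * f x) \<in> borel_measurable M" using assms by measurable
  show "AE x in M. norm (g x * f x) \<le> norm (B * f x)"
  proof (rule AE_I2)
    fix x
    have "\<bar>g x\<bar> * \<bar>f x\<bar> \<le> B * \<bar>f x\<bar>" using assms(3)[of x] by (simp add: mult_right_mono)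
    moreover have "B \<ge> 0" using assms(3)[of x] by linarith
    ultimately show "norm (g x * f x) \<le> norm (B * f x)" by (simp add: abs_mult)
  qed
qed

locale cor_setup = prob_space M for M :: "'a measure" +
  fixes F :: "nat \<Rightarrow> 'a measure" and \<xi> :: "nat \<Rightarrow> 'a \<Rightarrow> real" and \<alpha> :: real
  assumes sub: "\<And>i. subalgebra M (F i)"
    and mono: "\<And>i. sets (F i) \<subseteq> sets (F (Suc i))"
    and adapted: "\<And>i. \<xi> i \<in> borel_measurable (F i)"
    and integ: "\<And>i. integrable M (\<xi> i)"
    and mdiff: "\<And>i. i \<ge> 1 \<Longrightarrow> AE \<omega> in M. real_cond_exp M (F (i - 1)) (\<xi> i) \<omega> = 0"
    and alpha: "0 < \<alpha>" "\<alpha> < 1"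
    and Cfin: "\<And>i. i \<ge> 1 \<Longrightarrow>
        integrable M (\<lambda>\<omega>. (\<xi> i \<omega>)\<^sup>2 * exp ((max (\<xi> i \<omega>) 0) powr \<alpha>))"
begin

lemma sfs: "sigma_finite_subalgebra M (F i)"
  by (rule finite_measure_subalgebra_is_sigma_finite)
     (simp add: finite_measure_subalgebra_def finite_measure_subalgebra_axioms_def sub finite_measure_axioms)

lemma sets_mono: "i \<le> j \<Longrightarrow> sets (F i) \<subseteq> sets (F j)"
  using lift_Suc_mono_le[of "\<lambda>i. sets (F i)"] mono by blast

lemma meas_up: "i \<le> j \<Longrightarrow> f \<in> borel_measurable (F i) \<Longrightarrow> f \<in> borel_measurable (F j)"
proof -
  assume ij: "i \<le> j" and f: "f \<in> borel_measurable (F i)"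
  have "subalgebra (F j) (F i)"
    using sub[of i] sub[of j] sets_mono[OF ij] by (auto simp: subalgebra_def)
  then show ?thesis using f measurable_from_subalg by blast
qed

lemma xiM[measurable]: "\<xi> i \<in> borel_measurable M"
  using measurable_from_subalg[OF sub adapted] .

lemma condM[measurable]: "real_cond_exp M (F i) f \<in> borel_measurable M"
  by (rule borel_measurable_cond_exp2)

lemma condF: "real_cond_exp M (F i) f \<in> borel_measurable (F i)"
  by (rule borel_measurable_cond_exp)

definition "hh i \<omega> = (\<xi> i \<omega>)\<^sup>2 * exp ((max (\<xi> i \<omega>) 0) powr \<alpha>)"
definition "Up i \<omega> = max (real_cond_exp M (F (i - 1)) (hh i) \<omega>) 0"
definition "ZZ b k \<omega> = exp (\<Sum>i=1..k. b powr (\<alpha>-1) * min (\<xi> i \<omega>) b - (b powr (\<alpha>-1))^2/2 * Up i \<omega>)"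

lemma hhM[measurable]: "hh i \<in> borel_measurable M" unfolding hh_def by measurable

lemma UpF: "i \<ge> 1 \<Longrightarrow> i \<le> Suc k \<Longrightarrow> Up i \<in> borel_measurable (F k)"
  unfolding Up_def by (rule meas_up[of "i-1"]) (use condF in auto)

lemma ZZF: "ZZ b k \<in> borel_measurable (F k)"
proof -
  have "(\<lambda>\<omega>. \<Sum>i=1..k. b powr (\<alpha>-1) * min (\<xi> i \<omega>) b - (b powr (\<alpha>-1))^2/2 * Up i \<omega>) \<in> borel_measurable (F k)"
  proof (rule borel_measurable_sum)
    fix i assume i: "i \<in> {1..k}"
    have [measurable]: "\<xi> i \<in> borel_measurable (F k)" using meas_up[OF _ adapted] i by auto
    have [measurable]: "Up i \<in> borel_measurable (F k)" using UpF i by auto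
    show "(\<lambda>\<omega>. b powr (\<alpha>-1) * min (\<xi> i \<omega>) b - (b powr (\<alpha>-1))^2/2 * Up i \<omega>) \<in> borel_measurable (F k)"
      by measurable
  qed
  then show ?thesis unfolding ZZ_def by measurable
qed

lemma ZZM[measurable]: "ZZ b k \<in> borel_measurable M"
  using measurable_from_subalg[OF sub ZZF] .

lemma ZZ_bound: "b > 0 \<Longrightarrow> 0 \<le> ZZ b k \<omega> \<and> ZZ b k \<omega> \<le> exp (b powr (\<alpha>-1) * real k * b)"
proof -
  assume b: "b > 0"
  have "(\<Sum>i=1..k. b powr (\<alpha>-1) * min (\<xi> i \<omega>) b - (b powr (\<alpha>-1))^2/2 * Up i \<omega>) \<le> (\<Sum>i=1..k. b powr (\<alpha>-1) * b)"
  proof (rule sum_mono)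
    fix i
    have "b powr (\<alpha>-1) * min (\<xi> i \<omega>) b \<le> b powr (\<alpha>-1) * b" by (rule mult_left_mono) auto
    moreover have "(b powr (\<alpha>-1))^2/2 * Up i \<omega> \<ge> 0" by (simp add: Up_def)
    ultimately show "b powr (\<alpha>-1) * min (\<xi> i \<omega>) b - (b powr (\<alpha>-1))^2/2 * Up i \<omega> \<le> b powr (\<alpha>-1) * b" by linarith
  qed
  then show ?thesis unfolding ZZ_def by (simp add: mult.commute mult.left_commute)
qed

lemma ZZ_int: "b > 0 \<Longrightarrow> integrable M (ZZ b k)"
  using integrable_bdd_mult[where M=M and f="\<lambda>_. 1" and g="ZZ b k" and B="exp (b powr (\<alpha>-1) * real k * b)"] ZZ_bound[of b k]
  by auto


lemma ZZ_le1: assumes b: "b > 0" shows "integral\<^sup>L M (ZZ b k) \<le> 1"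
proof (induction k)
  case 0
  then show ?case by (simp add: ZZ_def prob_space)
next
  case (Suc k)
  define l where "l = b powr (\<alpha>-1)"
  define G where "G \<omega> = ZZ b k \<omega> * exp (- (l^2/2 * Up (Suc k) \<omega>))" for \<omega>
  define U where "U = real_cond_exp M (F k) (hh (Suc k))"
  interpret S: sigma_finite_subalgebra M "F k" by (rule sfs)
  have l0: "l > 0" using b by (simp add: l_def)
  have GF: "G \<in> borel_measurable (F k)"
    using ZZF[of b k] UpF[of "Suc k" k] unfolding G_def by measurable
  have GM[measurable]: "G \<in> borel_measurable M" using measurable_from_subalg[OF sub GF] .
  have Gb: "0 \<le> G \<omega> \<and> G \<omega> \<le> exp (l * real k * b)" for \<omega>
  proof -
    have "exp (- (l^2/2 * Up (Suc k) \<omega>)) \<le> 1" by (simp add: Up_def)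
    hence "G \<omega> \<le> ZZ b k \<omega>" using ZZ_bound[OF b, of k \<omega>] unfolding G_def
      by (simp add: mult_left_le)
    then show ?thesis using ZZ_bound[OF b, of k \<omega>] unfolding G_def l_def by simp
  qed
  have Gabs: "\<bar>G \<omega>\<bar> \<le> exp (l * real k * b)" for \<omega> using Gb[of \<omega>] by simp
  have ZS: "ZZ b (Suc k) \<omega> = G \<omega> * exp (l * min (\<xi> (Suc k) \<omega>) b)" for \<omega>
  proof -
    have e: "exp (S + (p - q)) = exp S * exp (- q) * exp p" for S p q :: real
      by (simp add: mult_exp_exp)
    show ?thesis unfolding ZZ_def G_def l_def
      by (simp add: e del: exp_minus)
  qed
  have ZSf: "ZZ b (Suc k) = (\<lambda>\<omega>. G \<omega> * exp (l * min (\<xi> (Suc k) \<omega>) b))"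
    by (rule ext) (rule ZS)
  have hint: "integrable M (hh (Suc k))" using Cfin[of "Suc k"] unfolding hh_def by simp
  have i1: "integrable M (\<lambda>\<omega>. G \<omega> * \<xi> (Suc k) \<omega>)"
    by (rule integrable_bdd_mult[OF integ GM Gabs])
  have i2: "integrable M (\<lambda>\<omega>. G \<omega> * hh (Suc k) \<omega>)"
    by (rule integrable_bdd_mult[OF hint GM Gabs])
  have i0: "integrable M G"
    using integrable_bdd_mult[where M=M and f="\<lambda>_. 1" and g=G, OF _ GM Gabs] by simp
  have Uint: "integrable M U" unfolding U_def using S.real_cond_exp_int(1)[OF hint] .
  have i3: "integrable M (\<lambda>\<omega>. G \<omega> * U \<omega>)"
    by (rule integrable_bdd_mult[OF Uint GM Gabs])
  have UpM[measurable]: "Up (Suc k) \<in> borel_measurable M" unfolding Up_def by measurable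
  have i4: "integrable M (\<lambda>\<omega>. G \<omega> * Up (Suc k) \<omega>)"
  proof (rule integrable_bdd_mult[OF _ GM Gabs])
    show "integrable M (Up (Suc k))" unfolding Up_def
      using Uint unfolding U_def by (intro integrable_max) auto
  qed
  have "integral\<^sup>L M (ZZ b (Suc k)) = (\<integral>\<omega>. G \<omega> * exp (l * min (\<xi> (Suc k) \<omega>) b) \<partial>M)"
    by (simp add: ZSf)
  also have "\<dots> \<le> (\<integral>\<omega>. G \<omega> + l * (G \<omega> * \<xi> (Suc k) \<omega>) + l^2/2 * (G \<omega> * hh (Suc k) \<omega>) \<partial>M)"
  proof (rule integral_mono)
    show "integrable M (\<lambda>\<omega>. G \<omega> * exp (l * min (\<xi> (Suc k) \<omega>) b))"
      using ZZ_int[OF b, of "Suc k"] unfolding ZSf .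
    show "integrable M (\<lambda>\<omega>. G \<omega> + l * (G \<omega> * \<xi> (Suc k) \<omega>) + l^2/2 * (G \<omega> * hh (Suc k) \<omega>))"
      using i0 i1 i2 by auto
    fix \<omega> assume "\<omega> \<in> space M"
    have p: "exp (l * min (\<xi> (Suc k) \<omega>) b) \<le> 1 + l * \<xi> (Suc k) \<omega> + l^2/2 * hh (Suc k) \<omega>"
    proof -
      have "exp (l * min (\<xi> (Suc k) \<omega>) b) \<le> 1 + l * min (\<xi> (Suc k) \<omega>) b + l^2/2 * hh (Suc k) \<omega>"
        using pt_bound[OF b alpha, of "\<xi> (Suc k) \<omega>"] unfolding l_def hh_def by simp
      moreover have "l * min (\<xi> (Suc k) \<omega>) b \<le> l * \<xi> (Suc k) \<omega>" using l0 by (simp add: mult_left_mono)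
      ultimately show ?thesis by linarith
    qed
    have "G \<omega> * exp (l * min (\<xi> (Suc k) \<omega>) b) \<le> G \<omega> * (1 + l * \<xi> (Suc k) \<omega> + l^2/2 * hh (Suc k) \<omega>)"
      using p Gb[of \<omega>] by (simp add: mult_left_mono)
    then show "G \<omega> * exp (l * min (\<xi> (Suc k) \<omega>) b) \<le> G \<omega> + l * (G \<omega> * \<xi> (Suc k) \<omega>) + l^2/2 * (G \<omega> * hh (Suc k) \<omega>)"
      by (simp add: algebra_simps)
  qed
  also have "\<dots> = integral\<^sup>L M G + l * (\<integral>\<omega>. G \<omega> * \<xi> (Suc k) \<omega> \<partial>M) + l^2/2 * (\<integral>\<omega>. G \<omega> * hh (Suc k) \<omega> \<partial>M)"
    using i0 i1 i2 by simp
  also have "(\<integral>\<omega>. G \<omega> * \<xi> (Suc k) \<omega> \<partial>M) = 0"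
  proof -
    have "(\<integral>\<omega>. G \<omega> * \<xi> (Suc k) \<omega> \<partial>M) = (\<integral>\<omega>. G \<omega> * real_cond_exp M (F k) (\<xi> (Suc k)) \<omega> \<partial>M)"
      using S.real_cond_exp_intg(2)[OF i1 GF] by simp
    also have "\<dots> = (\<integral>\<omega>. 0 \<partial>M)"
      using mdiff[of "Suc k"] by (intro integral_cong_AE) auto
    finally show ?thesis by simp
  qed
  also have "(\<integral>\<omega>. G \<omega> * hh (Suc k) \<omega> \<partial>M) = (\<integral>\<omega>. G \<omega> * U \<omega> \<partial>M)"
    using S.real_cond_exp_intg(2)[OF i2 GF] unfolding U_def by simp
  also have "\<dots> \<le> (\<integral>\<omega>. G \<omega> * Up (Suc k) \<omega> \<partial>M)"
    using i3 i4 Gb by (intro integral_mono) (auto simp: Up_def U_def intro!: mult_left_mono)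
  finally have "integral\<^sup>L M (ZZ b (Suc k)) \<le> integral\<^sup>L M G + l^2/2 * (\<integral>\<omega>. G \<omega> * Up (Suc k) \<omega> \<partial>M)"
    using l0 by (simp add: mult_left_mono)
  also have "\<dots> = (\<integral>\<omega>. G \<omega> + l^2/2 * (G \<omega> * Up (Suc k) \<omega>) \<partial>M)"
    using i0 i4 by simp
  also have "\<dots> \<le> integral\<^sup>L M (ZZ b k)"
  proof (rule integral_mono)
    show "integrable M (\<lambda>\<omega>. G \<omega> + l^2/2 * (G \<omega> * Up (Suc k) \<omega>))"
      using i0 i4 by simp
    show "integrable M (ZZ b k)" by (rule ZZ_int[OF b])
    fix \<omega> assume "\<omega> \<in> space M"
    define a where "a = l^2/2 * Up (Suc k) \<omega>"
    have "exp (-a) * (1 + a) \<le> 1"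
    proof -
      have "1 + a \<le> exp a" by (rule exp_ge_add_one_self)
      hence "exp (-a) * (1 + a) \<le> exp (-a) * exp a" by (simp add: mult_left_mono)
      then show ?thesis by (simp add: exp_minus)
    qed
    hence "ZZ b k \<omega> * (exp (-a) * (1 + a)) \<le> ZZ b k \<omega>"
      using ZZ_bound[OF b, of k \<omega>] by (simp add: mult_left_le)
    then show "G \<omega> + l^2/2 * (G \<omega> * Up (Suc k) \<omega>) \<le> ZZ b k \<omega>"
      unfolding G_def a_def by (simp add: algebra_simps)
  qed
  also have "\<dots> \<le> 1" by (rule Suc.IH)
  finally show ?case .
qed


lemma cond_nonneg: "AE \<omega> in M. \<forall>i. real_cond_exp M (F (i - 1)) (hh i) \<omega> \<ge> 0"
proof -
  have "AE \<omega> in M. real_cond_exp M (F (i - 1)) (hh i) \<omega> \<ge> 0" for i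
    by (rule sigma_finite_subalgebra.real_cond_exp_pos[OF sfs]) (auto simp: hh_def)
  then show ?thesis by (simp add: AE_all_countable)
qed

lemma main_bound:
  fixes n :: nat and x V :: real
  assumes n: "n \<ge> 1" and x: "x > 0"
    and Vb: "AE \<omega> in M. \<bar>\<Sum>i=1..n. real_cond_exp M (F (i - 1)) (hh i) \<omega>\<bar> \<le> V"
  shows "measure M {\<omega> \<in> space M.
            Max ((\<lambda>k. (\<Sum>i=1..k. \<xi> i \<omega>) / real n) ` {1..n}) \<ge> x}
    \<le> real n * exp (- ((real n * x) powr \<alpha>) + ((real n * x) powr (\<alpha>-1))^2/2 * V)
       + V / ((real n * x)^2 * exp ((real n * x) powr \<alpha>))"
proof -
  define b where "b = real n * x"
  define l where "l = b powr (\<alpha>-1)"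
  have b: "b > 0" using n x by (simp add: b_def)
  have l0: "l > 0" using b by (simp add: l_def)
  have lb: "l * b = b powr \<alpha>" using b by (simp add: l_def powr_mult_base mult.commute)
  define A where "A k = {\<omega> \<in> space M. b \<le> (\<Sum>i=1..k. min (\<xi> i \<omega>) b)}" for k
  define B where "B i = {\<omega> \<in> space M. b < \<xi> i \<omega>}" for i
  define E where "E = {\<omega> \<in> space M. Max ((\<lambda>k. (\<Sum>i=1..k. \<xi> i \<omega>) / real n) ` {1..n}) \<ge> x}"
  have AM: "A k \<in> sets M" for k unfolding A_def by measurable
  have BM: "B i \<in> sets M" for i unfolding B_def by measurable
  have sub1: "E \<subseteq> (\<Union>k\<in>{1..n}. A k) \<union> (\<Union>i\<in>{1..n}. B i)"
  proof
    fix \<omega> assume \<omega>: "\<omega> \<in> E"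
    then have sp: "\<omega> \<in> space M" by (simp add: E_def)
    have "Max ((\<lambda>k. (\<Sum>i=1..k. \<xi> i \<omega>) / real n) ` {1..n}) \<in> (\<lambda>k. (\<Sum>i=1..k. \<xi> i \<omega>) / real n) ` {1..n}"
      using n by (intro Max_in) auto
    then obtain k where k: "k \<in> {1..n}" "Max ((\<lambda>k. (\<Sum>i=1..k. \<xi> i \<omega>) / real n) ` {1..n}) = (\<Sum>i=1..k. \<xi> i \<omega>) / real n"
      by auto
    have "x \<le> (\<Sum>i=1..k. \<xi> i \<omega>) / real n" using \<omega> k by (simp add: E_def)
    hence Sk: "b \<le> (\<Sum>i=1..k. \<xi> i \<omega>)" using n by (simp add: b_def pos_le_divide_eq mult.commute)
    show "\<omega> \<in> (\<Union>k\<in>{1..n}. A k) \<union> (\<Union>i\<in>{1..n}. B i)"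
    proof (cases "\<exists>i\<in>{1..n}. b < \<xi> i \<omega>")
      case True then show ?thesis using sp by (auto simp: B_def)
    next
      case False
      have "(\<Sum>i=1..k. min (\<xi> i \<omega>) b) = (\<Sum>i=1..k. \<xi> i \<omega>)"
      proof (intro sum.cong refl)
        fix j assume "j \<in> {1..k}"
        hence "\<not> b < \<xi> j \<omega>" using False k by auto
        thus "min (\<xi> j \<omega>) b = \<xi> j \<omega>" by simp
      qed
      then have "\<omega> \<in> A k" using Sk k sp by (simp add: A_def)
      then show ?thesis using k by blast
    qed
  qed
  have "measure M E \<le> measure M ((\<Union>k\<in>{1..n}. A k) \<union> (\<Union>i\<in>{1..n}. B i))"
    using sub1 AM BM by (intro finite_measure_mono) auto
  also have "\<dots> \<le> measure M (\<Union>k\<in>{1..n}. A k) + measure M (\<Union>i\<in>{1..n}. B i)"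
    using AM BM by (intro measure_Un_le) auto
  also have "\<dots> \<le> (\<Sum>k\<in>{1..n}. measure M (A k)) + (\<Sum>i\<in>{1..n}. measure M (B i))"
    using AM BM by (intro add_mono finite_measure_subadditive_finite) auto
  finally have m1: "measure M E \<le> (\<Sum>k\<in>{1..n}. measure M (A k)) + (\<Sum>i\<in>{1..n}. measure M (B i))" .
  have AEsum: "AE \<omega> in M. \<forall>k\<in>{1..n}. (\<Sum>i=1..k. Up i \<omega>) \<le> V"
    using Vb cond_nonneg
  proof eventually_elim
    case (elim \<omega>)
    show ?case
    proof
      fix k assume k: "k \<in> {1..n}"
      have "(\<Sum>i=1..k. Up i \<omega>) = (\<Sum>i=1..k. real_cond_exp M (F (i - 1)) (hh i) \<omega>)"
        using elim(2) by (intro sum.cong) (auto simp: Up_def)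
      also have "\<dots> \<le> (\<Sum>i=1..n. real_cond_exp M (F (i - 1)) (hh i) \<omega>)"
        using elim(2) k by (intro sum_mono2) auto
      also have "\<dots> \<le> V" using elim(1) by linarith
      finally show "(\<Sum>i=1..k. Up i \<omega>) \<le> V" .
    qed
  qed
  have Ak: "measure M (A k) \<le> exp (- (b powr \<alpha>) + l^2/2 * V)" if k: "k \<in> {1..n}" for k
  proof -
    define c where "c = exp (l * b - l^2/2 * V)"
    have c0: "c > 0" by (simp add: c_def)
    have "measure M (A k) \<le> measure M {\<omega> \<in> space M. c \<le> ZZ b k \<omega>}"
    proof (rule finite_measure_mono_AE)
      show "{\<omega> \<in> space M. c \<le> ZZ b k \<omega>} \<in> sets M" by measurable
      show "AE \<omega> in M. \<omega> \<in> A k \<longrightarrow> \<omega> \<in> {\<omega> \<in> space M. c \<le> ZZ b k \<omega>}"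
        using AEsum
      proof eventually_elim
        case (elim \<omega>)
        show ?case
        proof
          assume \<omega>: "\<omega> \<in> A k"
          have s1: "l * b \<le> l * (\<Sum>i=1..k. min (\<xi> i \<omega>) b)"
            using \<omega> l0 by (simp add: A_def mult_left_mono)
          have s2: "l^2/2 * (\<Sum>i=1..k. Up i \<omega>) \<le> l^2/2 * V" using elim k by (simp add: mult_left_mono)
          have "(\<Sum>i=1..k. l * min (\<xi> i \<omega>) b - l^2/2 * Up i \<omega>)
                = l * (\<Sum>i=1..k. min (\<xi> i \<omega>) b) - l^2/2 * (\<Sum>i=1..k. Up i \<omega>)"
            by (simp add: sum_subtractf sum_distrib_left)
          hence "l * b - l^2/2 * V \<le> (\<Sum>i=1..k. l * min (\<xi> i \<omega>) b - l^2/2 * Up i \<omega>)"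
            using s1 s2 by linarith
          hence "c \<le> ZZ b k \<omega>" unfolding c_def ZZ_def l_def by simp
          then show "\<omega> \<in> {\<omega> \<in> space M. c \<le> ZZ b k \<omega>}" using \<omega> by (simp add: A_def)
        qed
      qed
    qed
    also have "\<dots> \<le> integral\<^sup>L M (ZZ b k) / c"
      using ZZ_int[OF b, of k] ZZ_bound[OF b, of k] c0
      by (intro integral_Markov_inequality_measure[where A="space M"]) auto
    also have "\<dots> \<le> 1 / c" using ZZ_le1[OF b, of k] c0 by (simp add: divide_right_mono)
    also have "\<dots> = exp (- (b powr \<alpha>) + l^2/2 * V)"
    proof -
      have "- (b powr \<alpha>) + l^2/2 * V = - (l * b - l^2/2 * V)" using lb by simp
      then show ?thesis unfolding c_def by (simp only: exp_minus inverse_eq_divide)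
    qed
    finally show ?thesis .
  qed
  have part1: "(\<Sum>k\<in>{1..n}. measure M (A k)) \<le> real n * exp (- (b powr \<alpha>) + l^2/2 * V)"
    using sum_mono[of "{1..n}" "\<lambda>k. measure M (A k)" "\<lambda>_. exp (- (b powr \<alpha>) + l^2/2 * V)"] Ak by simp
  define D where "D = b^2 * exp (b powr \<alpha>)"
  have D0: "D > 0" using b by (simp add: D_def)
  have Bi: "measure M (B i) \<le> integral\<^sup>L M (hh i) / D" if i: "i \<in> {1..n}" for i
  proof -
    have "measure M (B i) \<le> measure M {\<omega> \<in> space M. D \<le> hh i \<omega>}"
    proof (rule finite_measure_mono)
      show "{\<omega> \<in> space M. D \<le> hh i \<omega>} \<in> sets M" by measurable
      show "B i \<subseteq> {\<omega> \<in> space M. D \<le> hh i \<omega>}"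
      proof
        fix \<omega> assume \<omega>: "\<omega> \<in> B i"
        hence gt: "b < \<xi> i \<omega>" by (simp add: B_def)
        have "b^2 \<le> (\<xi> i \<omega>)^2" using gt b by (intro power_mono) auto
        moreover have "exp (b powr \<alpha>) \<le> exp ((max (\<xi> i \<omega>) 0) powr \<alpha>)"
          using gt b alpha by (simp add: powr_mono2)
        ultimately have "D \<le> hh i \<omega>" unfolding D_def hh_def
          by (intro mult_mono) auto
        then show "\<omega> \<in> {\<omega> \<in> space M. D \<le> hh i \<omega>}" using \<omega> by (simp add: B_def)
      qed
    qed
    also have "\<dots> \<le> integral\<^sup>L M (hh i) / D"
      using Cfin[of i] i D0 unfolding hh_def[abs_def]
      by (intro integral_Markov_inequality_measure[where A="space M"]) auto
    finally show ?thesis .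
  qed
  have sumh: "(\<Sum>i\<in>{1..n}. integral\<^sup>L M (hh i)) \<le> V"
  proof -
    have hint: "integrable M (hh i)" if "i \<in> {1..n}" for i using Cfin[of i] that unfolding hh_def[abs_def] by simp
    have "(\<Sum>i\<in>{1..n}. integral\<^sup>L M (hh i)) = (\<Sum>i\<in>{1..n}. integral\<^sup>L M (real_cond_exp M (F (i - 1)) (hh i)))"
      using sigma_finite_subalgebra.real_cond_exp_int(2)[OF sfs hint] by simp
    also have "\<dots> = (\<integral>\<omega>. (\<Sum>i=1..n. real_cond_exp M (F (i - 1)) (hh i) \<omega>) \<partial>M)"
      using Bochner_Integration.integral_sum[where I="{1..n}" and f="\<lambda>i. real_cond_exp M (F (i - 1)) (hh i)"]
        sigma_finite_subalgebra.real_cond_exp_int(1)[OF sfs hint]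
      by simp
    also have "\<dots> \<le> (\<integral>\<omega>. V \<partial>M)"
    proof (rule integral_mono_AE)
      show "integrable M (\<lambda>\<omega>. \<Sum>i=1..n. real_cond_exp M (F (i - 1)) (hh i) \<omega>)"
        using sigma_finite_subalgebra.real_cond_exp_int(1)[OF sfs hint] by auto
      show "integrable M (\<lambda>\<omega>. V)" by simp
      show "AE \<omega> in M. (\<Sum>i=1..n. real_cond_exp M (F (i - 1)) (hh i) \<omega>) \<le> V"
        using Vb by eventually_elim linarith
    qed
    also have "\<dots> = V" by (simp add: prob_space)
    finally show ?thesis .
  qed
  have part2: "(\<Sum>i\<in>{1..n}. measure M (B i)) \<le> V / D"
  proof -
    have "(\<Sum>i\<in>{1..n}. measure M (B i)) \<le> (\<Sum>i\<in>{1..n}. integral\<^sup>L M (hh i) / D)"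
      using Bi by (intro sum_mono) auto
    also have "\<dots> = (\<Sum>i\<in>{1..n}. integral\<^sup>L M (hh i)) / D" by (simp add: sum_divide_distrib)
    also have "\<dots> \<le> V / D" using sumh D0 by (simp add: divide_right_mono)
    finally show ?thesis .
  qed
  show ?thesis using m1 part1 part2 unfolding E_def D_def l_def b_def by linarith
qed

end

lemma term_bound:
  fixes p c N :: real
  assumes N: "N > 0" and p: "p \<le> exp (c * N)"
  shows "ereal_ln p / ereal N \<le> ereal c"
proof (cases "p \<le> 0")
  case True then show ?thesis using N by (simp add: ereal_ln_def)
next
  case False
  have "ln p \<le> c * N" using p False by (metis ln_exp ln_mono not_le)
  hence "ln p / N \<le> c" using N by (simp add: pos_divide_le_eq)
  then show ?thesis using False N by (simp add: ereal_ln_def ereal_divide)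
qed

lemma limsup_key:
  fixes P :: "nat \<Rightarrow> real" and \<alpha> c :: real
  assumes "eventually (\<lambda>n. n \<ge> 1 \<and> P n \<le> exp (c * real n powr \<alpha>)) sequentially"
  shows "limsup (\<lambda>n. ereal_ln (P n) / ereal (real n powr \<alpha>)) \<le> ereal c"
proof (rule Limsup_bounded)
  show "eventually (\<lambda>n. ereal_ln (P n) / ereal (real n powr \<alpha>) \<le> ereal c) sequentially"
    using assms by eventually_elim (intro term_bound, auto)
qed

theorem corollary2p1:
  fixes M :: "'a measure" and F :: "nat \<Rightarrow> 'a measure" and \<xi> :: "nat \<Rightarrow> 'a \<Rightarrow> real"
    and \<alpha> x :: real
  assumes prob: "prob_space M"
    and sub: "\<And>i. subalgebra M (F i)"
    and mono: "\<And>i. sets (F i) \<subseteq> sets (F (Suc i))"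
    and F0: "sets (F 0) = {{}, space M}"
    and xi0: "\<And>\<omega>. \<xi> 0 \<omega> = 0"
    and adapted: "\<And>i. \<xi> i \<in> borel_measurable (F i)"
    and integ: "\<And>i. integrable M (\<xi> i)"
    and mdiff: "\<And>i. i \<ge> 1 \<Longrightarrow> AE \<omega> in M. real_cond_exp M (F (i - 1)) (\<xi> i) \<omega> = 0"
    and alpha: "0 < \<alpha>" "\<alpha> < 1"
    and Cfin: "\<And>i. i \<ge> 1 \<Longrightarrow>
        integrable M (\<lambda>\<omega>. (\<xi> i \<omega>)\<^sup>2 * exp ((max (\<xi> i \<omega>) 0) powr \<alpha>))"
    and Ups: "\<And>\<epsilon>. \<epsilon> > 0 \<Longrightarrow> eventually (\<lambda>n.
        esssup M (\<lambda>\<omega>. ereal \<bar>\<Sum>i=1..n. real_cond_exp M (F (i - 1))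
            (\<lambda>\<omega>'. (\<xi> i \<omega>')\<^sup>2 * exp ((max (\<xi> i \<omega>') 0) powr \<alpha>)) \<omega>\<bar>)
          \<le> ereal (\<epsilon> * real n powr (2 - \<alpha>))) sequentially"
    and x: "x \<ge> 0"
  shows "limsup (\<lambda>n. ereal_ln (measure M {\<omega> \<in> space M.
            Max ((\<lambda>k. (\<Sum>i=1..k. \<xi> i \<omega>) / real n) ` {1..n}) \<ge> x}) / ereal (real n powr \<alpha>))
         \<le> ereal (- (x powr \<alpha>))"
proof -
  interpret cor_setup M F \<xi> \<alpha>
    using prob sub mono adapted integ mdiff alpha Cfin
    unfolding cor_setup_def cor_setup_axioms_def by auto
  define P where "P n = measure M {\<omega> \<in> space M.
            Max ((\<lambda>k. (\<Sum>i=1..k. \<xi> i \<omega>) / real n) ` {1..n}) \<ge> x}" for n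
  have hheq: "(\<lambda>\<omega>'. (\<xi> i \<omega>')\<^sup>2 * exp ((max (\<xi> i \<omega>') 0) powr \<alpha>)) = hh i" for i
    by (simp add: fun_eq_iff hh_def)
  show ?thesis
  proof (cases "x = 0")
    case True
    have "limsup (\<lambda>n. ereal_ln (P n) / ereal (real n powr \<alpha>)) \<le> ereal 0"
    proof (rule limsup_key)
      show "eventually (\<lambda>n. n \<ge> 1 \<and> P n \<le> exp (0 * real n powr \<alpha>)) sequentially"
        using eventually_ge_at_top[of "1::nat"] by eventually_elim (simp add: P_def)
    qed
    then show ?thesis using True alpha unfolding P_def by simp
  next
    case False
    hence x0: "x > 0" using x by simp
    have "limsup (\<lambda>n. ereal_ln (P n) / ereal (real n powr \<alpha>)) \<le> ereal (- (x powr \<alpha>))"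
    proof (rule ereal_le_epsilon2)
      fix \<delta> :: real assume \<delta>: "\<delta> > 0"
      define \<epsilon> where "\<epsilon> = \<delta> / x powr (2*\<alpha>-2)"
      define K where "K = \<epsilon> / x^2"
      have \<epsilon>0: "\<epsilon> > 0" using \<delta> x0 by (simp add: \<epsilon>_def)
      have K0: "K \<ge> 0" using \<epsilon>0 by (simp add: K_def)
      have lim: "((\<lambda>n::nat. ln (real n + K) / real n powr \<alpha>) \<longlongrightarrow> 0) sequentially"
        using alpha K0 by real_asymp
      have ev1: "eventually (\<lambda>n. ln (real n + K) / real n powr \<alpha> < \<delta>/2) sequentially"
        using order_tendstoD(2)[OF lim, of "\<delta>/2"] \<delta> by simp
      have "limsup (\<lambda>n. ereal_ln (P n) / ereal (real n powr \<alpha>)) \<le> ereal (- (x powr \<alpha>) + \<delta>)"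
      proof (rule limsup_key)
        show "eventually (\<lambda>n. n \<ge> 1 \<and> P n \<le> exp ((- (x powr \<alpha>) + \<delta>) * real n powr \<alpha>)) sequentially"
          using eventually_ge_at_top[of "1::nat"] ev1 Ups[OF \<epsilon>0]
        proof eventually_elim
          case (elim n)
          define N where "N = real n powr \<alpha>"
          define V where "V = \<epsilon> * real n powr (2 - \<alpha>)"
          define A where "A = (real n * x) powr \<alpha>"
          define B where "B = ((real n * x) powr (\<alpha>-1))^2/2 * V"
          have n1: "real n \<ge> 1" using elim(1) by simp
          have N0: "N > 0" using n1 by (simp add: N_def)
          have e3: "esssup M (\<lambda>\<omega>. ereal \<bar>\<Sum>i=1..n. real_cond_exp M (F (i - 1)) (hh i) \<omega>\<bar>) \<le> ereal V"
            using elim(3) unfolding hheq V_def .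
          have Vb: "AE \<omega> in M. \<bar>\<Sum>i=1..n. real_cond_exp M (F (i - 1)) (hh i) \<omega>\<bar> \<le> V"
            using esssup_AE[of "\<lambda>\<omega>. ereal \<bar>\<Sum>i=1..n. real_cond_exp M (F (i - 1)) (hh i) \<omega>\<bar>" M]
          proof eventually_elim
            case (elim \<omega>)
            have "ereal \<bar>\<Sum>i=1..n. real_cond_exp M (F (i - 1)) (hh i) \<omega>\<bar> \<le> ereal V"
              using elim e3 by (rule order_trans)
            then show ?case by simp
          qed
          have mb: "P n \<le> real n * exp (- A + B) + V / ((real n * x)^2 * exp A)"
            using main_bound[OF elim(1) x0 Vb] unfolding P_def A_def B_def .
          have AN: "A = x powr \<alpha> * N"
            unfolding A_def N_def using x0 n1 by (simp add: powr_mult)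
          have BN: "B = \<delta>/2 * N"
          proof -
            have "((real n * x) powr (\<alpha>-1))^2 = real n powr (2*\<alpha>-2) * x powr (2*\<alpha>-2)"
              using x0 n1 by (simp add: power2_eq_square powr_mult powr_add[symmetric] algebra_simps)
            moreover have "real n powr (2*\<alpha>-2) * real n powr (2-\<alpha>) = N"
              unfolding N_def by (simp add: powr_add[symmetric])
            ultimately show ?thesis unfolding B_def V_def \<epsilon>_def using x0
              by (simp add: field_simps)
          qed
          have VD: "V / ((real n * x)^2 * exp A) \<le> K * exp (- A)"
          proof -
            have "real n powr (2 - \<alpha>) \<le> real n powr 2" using n1 alpha by (intro powr_mono) auto
            hence "real n powr (2 - \<alpha>) \<le> (real n)^2" using n1 by (simp add: powr_realpow)
            hence "V \<le> \<epsilon> * (real n)^2" unfolding V_def using \<epsilon>0 by (simp add: mult_left_mono)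
            hence "V / ((real n * x)^2 * exp A) \<le> \<epsilon> * (real n)^2 / ((real n * x)^2 * exp A)"
              using n1 x0 by (intro divide_right_mono) auto
            also have "\<dots> = K * exp (- A)" unfolding K_def using n1 x0
              by (simp add: exp_minus field_simps power_mult_distrib)
            finally show ?thesis .
          qed
          have "\<delta>/2*N \<ge> 0" using \<delta> N0 by simp
          hence B0: "B \<ge> 0" using BN by linarith
          have "P n \<le> real n * exp (- A + B) + K * exp (- A + B)"
          proof -
            have "K * exp (-A) \<le> K * exp (-A + B)" using K0 B0 by (intro mult_left_mono) auto
            then show ?thesis using mb VD by linarith
          qed
          also have "\<dots> = (real n + K) * exp (- A + B)" by (simp add: algebra_simps)
          also have "\<dots> = exp (ln (real n + K) - A + B)"
          proof -
            have "exp (ln (real n + K) + (- A + B)) = exp (ln (real n + K)) * exp (- A + B)" by (rule exp_add)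
            moreover have "exp (ln (real n + K)) = real n + K" using n1 K0 by simp
            moreover have "ln (real n + K) - A + B = ln (real n + K) + (- A + B)" by simp
            ultimately show ?thesis by (metis (no_types))
          qed
          also have "\<dots> \<le> exp ((- (x powr \<alpha>) + \<delta>) * N)"
          proof -
            have "ln (real n + K) \<le> \<delta>/2 * N" using elim(2) N0 unfolding N_def by (simp add: divide_less_eq less_imp_le)
            then show ?thesis unfolding AN BN by (simp add: algebra_simps)
          qed
          finally show ?case using elim(1) unfolding N_def by simp
        qed
      qed
      then show "limsup (\<lambda>n. ereal_ln (P n) / ereal (real n powr \<alpha>)) \<le> ereal (- (x powr \<alpha>)) + ereal \<delta>"
        by simp
    qed
    then show ?thesis unfolding P_def .
  qed
qed

end
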